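(* Let $\mathcal{Q}$ be a quadrangle with vertices $A,C,B,D$ in cyclic order. For each point $X$ on the line $A\vee B$ put $Y=X\cdot\rho_{A,B}$ and $Z(X)=(C\vee X)\wedge(D\vee Y)$. Then $C\vee X\neq D\vee Y$ for every $X\in A\vee B$, and the map $X\mapsto Z(X)$ is a bijection from the line $A\vee B$ onto the harmonic curve $\mathcal{C}_{\mathcal{Q}}$.
   Context: $\mathbb{P}^2$ denotes the projective plane over a field $F$ with $\operatorname{char}F\neq 2$. For distinct points $X,Y$, $X\vee Y$ is the line through them; for distinct lines $\ell,m$, $\ell\wedge m$ is their common point. Maps act on the right: $X\cdot\rho$. Four distinct collinear points $A,C,B,D$ form a harmonic set with conjugate pairs $\{A,B\}$ and $\{C,D\}$ if the cross-ratio $(A,B;C,D)=-1$; $D$ is then the harmonic conjugate of $C$ with respect to $A,B$. Four distinct concurrent lines form a harmonic pencil with given conjugate pairs if some (equivalently every) line not through their common point meets them in a harmonic set with the corresponding conjugate pairs. For distinct points $A,B$ on a line $\ell$, the harmonic reflection $\rho_{A,B}:\ell\to\ell$ fixes $A$ and $B$ and sends every other point of $\ell$ to its harmonic conjugate with respect to $A,B$. A quadrangle $\mathcal{Q}$ with vertices $A,C,B,D$ (in cyclic order) consists of four points in general position (no three collinear) together with this cyclic order up to reversal; its sides are $A\vee C, C\vee B, B\vee D, D\vee A$, its opposite vertex pairs are $\{A,B\}$ and $\{C,D\}$, and its diagonal lines are $A\vee B$ and $C\vee D$. The harmonic curve $\mathcal{C}_{\mathcal{Q}}$ is the set consisting of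 $A,C,B,D$ together with all points $Z\notin\{A,B,C,D\}$ such that $Z\vee A, Z\vee C, Z\vee B, Z\vee D$ are four distinct lines forming a harmonic pencil with conjugate pairs $\{Z\vee A,Z\vee B\}$ and $\{Z\vee C,Z\vee D\}$. *)

theory Defs
  imports Main
begin

type_synonym 'a vec3 = "'a \<times> 'a \<times> 'a"

definition vsmult :: "'a::field \<Rightarrow> 'a vec3 \<Rightarrow> 'a vec3" where
  "vsmult c v = (case v of (x, y, z) \<Rightarrow> (c * x, c * y, c * z))"

definition vadd :: "'a::field vec3 \<Rightarrow> 'a vec3 \<Rightarrow> 'a vec3" where
  "vadd v w = (case v of (x, y, z) \<Rightarrow> case w of (x', y', z') \<Rightarrow> (x + x', y + y', z + z'))"

definition vdot :: "'a::field vec3 \<Rightarrow> 'a vec3 \<Rightarrow> 'a" where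
  "vdot v w = (case v of (x, y, z) \<Rightarrow> case w of (x', y', z') \<Rightarrow> x * x' + y * y' + z * z')"

typedef (overloaded) 'a point = "{S :: ('a::field) vec3 set. \<exists>v. v \<noteq> (0, 0, 0) \<and> S = {vsmult c v | c. c \<noteq> 0}}"
  by (rule exI[of _ "{vsmult c (1, 0, 0) | c. c \<noteq> 0}"], rule CollectI, rule exI[of _ "(1,0,0)"]) simp

definition rep :: "'a::field point \<Rightarrow> 'a vec3" where
  "rep P = (SOME v. v \<in> Rep_point P)"

definition line_of :: "'a::field vec3 \<Rightarrow> 'a point set" where
  "line_of w = {P. vdot (rep P) w = 0}"

definition is_line :: "'a::field point set \<Rightarrow> bool" where
  "is_line L \<longleftrightarrow> (\<exists>w. w \<noteq> (0, 0, 0) \<and> L = line_of w)"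

definition join :: "'a::field point \<Rightarrow> 'a point \<Rightarrow> 'a point set" where
  "join X Y = (THE L. is_line L \<and> X \<in> L \<and> Y \<in> L)"

definition meet :: "'a::field point set \<Rightarrow> 'a point set \<Rightarrow> 'a point" where
  "meet l m = (THE P. P \<in> l \<and> P \<in> m)"

definition collinear :: "'a::field point set \<Rightarrow> bool" where
  "collinear S \<longleftrightarrow> (\<exists>L. is_line L \<and> S \<subseteq> L)"

definition coords :: "'a::field point \<Rightarrow> 'a point \<Rightarrow> 'a point \<Rightarrow> 'a \<times> 'a" where
  "coords P A B = (THE p. rep P = vadd (vsmult (fst p) (rep A)) (vsmult (snd p) (rep B)))"

definition cross_ratio :: "'a::field point \<Rightarrow> 'a point \<Rightarrow> 'a point \<Rightarrow> 'a point \<Rightarrow> 'a" where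
  "cross_ratio A B C D =
     (let (a, b) = coords C A B; (c, d) = coords D A B in (b / a) / (d / c))"

definition harmonic_set :: "'a::field point \<Rightarrow> 'a point \<Rightarrow> 'a point \<Rightarrow> 'a point \<Rightarrow> bool" where
  "harmonic_set A B C D \<longleftrightarrow> distinct [A, B, C, D] \<and> collinear {A, B, C, D}
     \<and> cross_ratio A B C D = -1"

definition harmonic_pencil ::
  "'a::field point set \<Rightarrow> 'a point set \<Rightarrow> 'a point set \<Rightarrow> 'a point set \<Rightarrow> bool" where
  "harmonic_pencil l1 l2 l3 l4 \<longleftrightarrow>
     is_line l1 \<and> is_line l2 \<and> is_line l3 \<and> is_line l4 \<and> distinct [l1, l2, l3, l4] \<and>
     (\<exists>P0. P0 \<in> l1 \<and> P0 \<in> l2 \<and> P0 \<in> l3 \<and> P0 \<in> l4 \<and>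
        (\<exists>m. is_line m \<and> P0 \<notin> m \<and>
           harmonic_set (meet m l1) (meet m l2) (meet m l3) (meet m l4)))"

definition hrefl :: "'a::field point \<Rightarrow> 'a point \<Rightarrow> 'a point \<Rightarrow> 'a point" where
  "hrefl A B X = (if X = A \<or> X = B then X else (THE Y. harmonic_set A B X Y))"

definition quadrangle :: "'a::field point \<Rightarrow> 'a point \<Rightarrow> 'a point \<Rightarrow> 'a point \<Rightarrow> bool" where
  "quadrangle A C B D \<longleftrightarrow> distinct [A, C, B, D] \<and>
     \<not> collinear {A, C, B} \<and> \<not> collinear {A, C, D} \<and>
     \<not> collinear {A, B, D} \<and> \<not> collinear {C, B, D}"

definition harmonic_curve :: "'a::field point \<Rightarrow> 'a point \<Rightarrow> 'a point \<Rightarrow> 'a point \<Rightarrow> 'a point set" where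
  "harmonic_curve A C B D = {A, C, B, D} \<union>
     {Z. Z \<notin> {A, B, C, D} \<and>
         harmonic_pencil (join Z A) (join Z B) (join Z C) (join Z D)}"

end

theory Submission
  imports Defs
begin


definition cross :: "'a::field vec3 \<Rightarrow> 'a vec3 \<Rightarrow> 'a vec3" where
  "cross u v = (case u of (u1,u2,u3) \<Rightarrow> case v of (v1,v2,v3) \<Rightarrow>
     (u2*v3 - u3*v2, u3*v1 - u1*v3, u1*v2 - u2*v1))"

definition det3 :: "'a::field vec3 \<Rightarrow> 'a vec3 \<Rightarrow> 'a vec3 \<Rightarrow> 'a" where
  "det3 u v w = vdot u (cross v w)"

lemma cross_simp[simp]: "cross (u1,u2,u3) (v1,v2,v3) = (u2*v3 - u3*v2, u3*v1 - u1*v3, u1*v2 - u2*v1)"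
  by (simp add: cross_def)
lemma vdot_simp[simp]: "vdot (u1,u2,u3) (v1,v2,v3) = u1*v1+u2*v2+u3*v3"
  by (simp add: vdot_def)
lemma vsmult_simp[simp]: "vsmult c (u1,u2,u3) = (c*u1,c*u2,c*u3)"
  by (simp add: vsmult_def)
lemma vadd_simp[simp]: "vadd (u1,u2,u3) (v1,v2,v3) = (u1+v1,u2+v2,u3+v3)"
  by (simp add: vadd_def)
lemma det3_simp[simp]: "det3 (u1,u2,u3) (v1,v2,v3) (w1,w2,w3) =
   u1*(v2*w3 - v3*w2) + u2*(v3*w1 - v1*w3) + u3*(v1*w2 - v2*w1)"
  by (simp add: det3_def algebra_simps)

lemma det3_cyc: "det3 u v w = det3 v w u"
  by (cases u rule: prod_cases3; cases v rule: prod_cases3; cases w rule: prod_cases3) (simp add: algebra_simps)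
lemma det3_swap: "det3 u w v = - det3 u v w"
  by (cases u rule: prod_cases3; cases v rule: prod_cases3; cases w rule: prod_cases3) (simp add: algebra_simps)
lemma det3_uu: "det3 u u w = 0"
  by (cases u rule: prod_cases3; cases w rule: prod_cases3) (simp add: algebra_simps)
lemma det3_vv: "det3 u v v = 0"
  by (cases u rule: prod_cases3; cases v rule: prod_cases3) (simp add: algebra_simps)
lemma vdot_comm: "vdot u v = vdot v u"
  by (cases u rule: prod_cases3; cases v rule: prod_cases3) (simp add: algebra_simps)
lemma vdot_cross1: "vdot u (cross u v) = 0"
  by (cases u rule: prod_cases3; cases v rule: prod_cases3) (simp add: algebra_simps)
lemma vdot_cross2: "vdot v (cross u v) = 0"
  by (cases u rule: prod_cases3; cases v rule: prod_cases3) (simp add: algebra_simps)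
lemma cross_anti: "cross v u = vsmult (-1) (cross u v)"
  by (cases u rule: prod_cases3; cases v rule: prod_cases3) (simp add: algebra_simps)
lemma cross_self: "cross u u = (0,0,0)"
  by (cases u rule: prod_cases3) (simp add: algebra_simps)

lemma bac_cab: "cross u (cross v w) = vadd (vsmult (vdot u w) v) (vsmult (- vdot u v) w)"
  by (cases u rule: prod_cases3; cases v rule: prod_cases3; cases w rule: prod_cases3) (simp add: algebra_simps)

lemma cross4: "cross (cross p q) (cross r s) = vadd (vsmult (det3 p q s) r) (vsmult (- det3 p q r) s)"
  by (cases p rule: prod_cases3; cases q rule: prod_cases3; cases r rule: prod_cases3; cases s rule: prod_cases3)
     (simp add: algebra_simps)

lemma dual_id: "vsmult (det3 p q r) w = vadd (vadd (vsmult (vdot p w) (cross q r)) (vsmult (vdot q w) (cross r p))) (vsmult (vdot r w) (cross p q))"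
  by (cases p rule: prod_cases3; cases q rule: prod_cases3; cases r rule: prod_cases3; cases w rule: prod_cases3)
     (simp add: algebra_simps)

lemma cramer: "vsmult (det3 e p q) v = vadd (vadd (vsmult (det3 v p q) e) (vsmult (det3 e v q) p)) (vsmult (det3 e p v) q)"
  by (cases p rule: prod_cases3; cases q rule: prod_cases3; cases e rule: prod_cases3; cases v rule: prod_cases3)
     (simp add: algebra_simps)

lemma det3_smult: "det3 (vsmult k u) (vsmult l v) (vsmult m w) = k*l*m * det3 u v w"
  by (cases u rule: prod_cases3; cases v rule: prod_cases3; cases w rule: prod_cases3) (simp add: algebra_simps)

lemma vdot_smult: "vdot (vsmult k u) v = k * vdot u v"
  by (cases u rule: prod_cases3; cases v rule: prod_cases3) (simp add: algebra_simps)

lemma vsmult_assoc: "vsmult c (vsmult k v) = vsmult (c*k) v"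
  by (cases v rule: prod_cases3) (simp add: algebra_simps)

lemma vsmult_1: "vsmult 1 v = v"
  by (cases v rule: prod_cases3) simp

lemma vsmult_zero_iff: "vsmult k v = (0,0,0) \<longleftrightarrow> k = 0 \<or> v = (0,0,0)"
  by (cases v rule: prod_cases3) auto

lemma vsmult_0[simp]: "vsmult 0 v = (0,0,0)"
  by (cases v rule: prod_cases3) simp
lemma vadd_0l[simp]: "vadd (0,0,0) v = v"
  by (cases v rule: prod_cases3) simp
lemma vadd_0r[simp]: "vadd v (0,0,0) = v"
  by (cases v rule: prod_cases3) simp

lemma parallel:
  assumes "cross u w = (0,0,0)" "u \<noteq> (0,0,0)"
  shows "\<exists>k. w = vsmult k u"
proof -
  obtain u1 u2 u3 where u: "u = (u1,u2,u3)" by (cases u rule: prod_cases3)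
  obtain w1 w2 w3 where w: "w = (w1,w2,w3)" by (cases w rule: prod_cases3)
  have e: "u2*w3 = u3*w2" "u3*w1 = u1*w3" "u1*w2 = u2*w1" using assms(1) by (auto simp: u w)
  show ?thesis
  proof (cases "u1 \<noteq> 0")
    case True
    show ?thesis
      apply (rule exI[of _ "w1/u1"]) using True e by (simp add: u w field_simps)
  next
    case F1: False
    show ?thesis
    proof (cases "u2 \<noteq> 0")
      case True
      show ?thesis
        apply (rule exI[of _ "w2/u2"]) using True F1 e by (simp add: u w field_simps)
    next
      case False
      then have "u3 \<noteq> 0" using F1 assms(2) u by auto
      then show ?thesis
        apply -
        apply (rule exI[of _ "w3/u3"]) using F1 False e by (simp add: u w field_simps)
    qed
  qed
qed



definition pt :: "'a::field vec3 \<Rightarrow> 'a point" where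
  "pt v = Abs_point {vsmult c v | c. c \<noteq> 0}"

lemma set_smult: assumes "k \<noteq> 0"
  shows "{vsmult c (vsmult k v) | c. c \<noteq> (0::'a::field)} = {vsmult c v | c. c \<noteq> 0}"
proof (intro set_eqI iffI)
  fix x assume "x \<in> {vsmult c (vsmult k v) | c. c \<noteq> 0}"
  then obtain c where "c \<noteq> 0" "x = vsmult c (vsmult k v)" by auto
  then show "x \<in> {vsmult c v | c. c \<noteq> 0}" using assms by (auto simp: vsmult_assoc)
next
  fix x assume "x \<in> {vsmult c v | c. c \<noteq> 0}"
  then obtain c where "c \<noteq> 0" "x = vsmult c v" by auto
  then have "x = vsmult (c/k) (vsmult k v)" "c/k \<noteq> 0" using assms by (auto simp: vsmult_assoc)
  then show "x \<in> {vsmult c (vsmult k v) | c. c \<noteq> 0}" by blast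
qed

lemma rep_in: "rep P \<in> Rep_point P"
proof -
  obtain v where "v \<noteq> (0,0,0)" "Rep_point P = {vsmult c v | c. c \<noteq> 0}"
    using Rep_point[of P] unfolding mem_Collect_eq by blast
  moreover have "v = vsmult 1 v" by (simp add: vsmult_1)
  ultimately have "v \<in> Rep_point P" by (metis (mono_tags, lifting) mem_Collect_eq one_neq_zero)
  then show ?thesis unfolding rep_def by (rule someI)
qed

lemma rep_form: "\<exists>v k. v \<noteq> (0,0,0) \<and> k \<noteq> 0 \<and> Rep_point P = {vsmult c v | c. c \<noteq> 0} \<and> rep P = vsmult k v"
proof -
  obtain v where v: "v \<noteq> (0,0,0)" "Rep_point P = {vsmult c v | c. c \<noteq> 0}"
    using Rep_point[of P] unfolding mem_Collect_eq by blast
  then obtain k where "k \<noteq> 0" "rep P = vsmult k v" using rep_in[of P] by blast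
  then show ?thesis using v by blast
qed

lemma rep_nz: "rep P \<noteq> (0,0,0)"
  using rep_form[of P] by (auto simp: vsmult_zero_iff)

lemma pt_rep: "pt (rep P) = P"
proof -
  obtain v k where h: "v \<noteq> (0,0,0)" "k \<noteq> 0" "Rep_point P = {vsmult c v | c. c \<noteq> 0}" "rep P = vsmult k v"
    using rep_form[of P] by blast
  have "pt (rep P) = Abs_point {vsmult c v | c. c \<noteq> 0}"
    unfolding pt_def h(4) using set_smult[OF h(2), of v] by simp
  also have "\<dots> = Abs_point (Rep_point P)" using h(3) by simp
  also have "\<dots> = P" by (rule Rep_point_inverse)
  finally show ?thesis .
qed

lemma rep_pt: assumes "v \<noteq> (0,0,0)" shows "\<exists>k. k \<noteq> 0 \<and> rep (pt v) = vsmult k v"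
proof -
  have "Rep_point (pt v) = {vsmult c v | c. c \<noteq> 0}"
    unfolding pt_def using assms by (intro Abs_point_inverse) (unfold mem_Collect_eq, blast)
  then show ?thesis using rep_in[of "pt v"] by blast
qed

lemma pt_smult: "k \<noteq> 0 \<Longrightarrow> pt (vsmult k v) = pt v"
  unfolding pt_def by (simp add: set_smult)

lemma pt_eq: assumes "v \<noteq> (0,0,0)" "w \<noteq> (0,0,0)" "pt v = pt w"
  shows "\<exists>k. k \<noteq> 0 \<and> w = vsmult k v"
proof -
  obtain k1 where k1: "k1 \<noteq> 0" "rep (pt v) = vsmult k1 v" using rep_pt assms by blast
  obtain k2 where k2: "k2 \<noteq> 0" "rep (pt w) = vsmult k2 w" using rep_pt assms by blast
  have "vsmult k2 w = vsmult k1 v" using k1 k2 assms by simp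
  then have "vsmult (1/k2) (vsmult k2 w) = vsmult (1/k2) (vsmult k1 v)" by simp
  then have "w = vsmult (k1/k2) v" using k2 by (simp add: vsmult_assoc vsmult_1)
  then show ?thesis using k1 k2 by (intro exI[of _ "k1/k2"]) auto
qed

lemma det_nz_cross: "det3 e v w \<noteq> 0 \<Longrightarrow> cross v w \<noteq> (0,0,0)"
  unfolding det3_def by (cases e rule: prod_cases3) auto
lemma det_nz1: "det3 e v w \<noteq> 0 \<Longrightarrow> e \<noteq> (0,0,0)"
  by (cases v rule: prod_cases3; cases w rule: prod_cases3) auto
lemma det_nz2: "det3 e v w \<noteq> 0 \<Longrightarrow> v \<noteq> (0,0,0)"
  by (cases e rule: prod_cases3; cases w rule: prod_cases3) auto
lemma det_nz3: "det3 e v w \<noteq> 0 \<Longrightarrow> w \<noteq> (0,0,0)"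
  by (cases e rule: prod_cases3; cases v rule: prod_cases3) auto

lemma cross_nz1: "cross v w \<noteq> (0,0,0) \<Longrightarrow> v \<noteq> (0,0,0)"
  by (cases w rule: prod_cases3) auto
lemma cross_nz2: "cross v w \<noteq> (0,0,0) \<Longrightarrow> w \<noteq> (0,0,0)"
  by (cases v rule: prod_cases3) auto

lemma det_ne_pt: assumes "det3 e v w \<noteq> 0" shows "pt v \<noteq> pt w"
proof
  assume h: "pt v = pt w"
  have "v \<noteq> (0,0,0)" "w \<noteq> (0,0,0)" using assms det_nz2 det_nz3 by blast+
  then obtain k where "w = vsmult k v" using pt_eq h by blast
  then have "det3 e v w = 0" using det3_smult[of 1 e 1 v k v] det3_vv[of e v] by (simp add: vsmult_1)
  then show False using assms by simp
qed

lemma mem_line_pt: assumes "v \<noteq> (0,0,0)" shows "pt v \<in> line_of n \<longleftrightarrow> vdot v n = 0"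
proof -
  obtain k where "k \<noteq> 0" "rep (pt v) = vsmult k v" using rep_pt assms by blast
  then show ?thesis unfolding line_of_def by (simp add: vdot_smult)
qed

lemma mem_line: "P \<in> line_of n \<longleftrightarrow> vdot (rep P) n = 0"
  unfolding line_of_def by simp

lemma is_line_line_of: "n \<noteq> (0,0,0) \<Longrightarrow> is_line (line_of n)"
  unfolding is_line_def by blast

lemma line_of_smult: "k \<noteq> 0 \<Longrightarrow> line_of (vsmult k n) = line_of n"
  unfolding line_of_def by (simp add: vdot_comm[of _ "vsmult k n"] vdot_smult) (simp add: vdot_comm)

lemma orth2:
  assumes "vdot p u = 0" "vdot p w = 0" "cross u w \<noteq> (0,0,0)"
  shows "\<exists>k. p = vsmult k (cross u w)"
proof -
  have "cross p (cross u w) = (0,0,0)" using assms by (simp add: bac_cab vdot_comm)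
  then have "cross (cross u w) p = (0,0,0)" by (simp add: cross_anti[of p] vsmult_zero_iff)
  then show ?thesis using parallel assms(3) by blast
qed

lemma join_unique:
  assumes "cross v w \<noteq> (0,0,0)" "is_line L" "pt v \<in> L" "pt w \<in> L"
  shows "L = line_of (cross v w)"
proof -
  have nz: "v \<noteq> (0,0,0)" "w \<noteq> (0,0,0)" using assms(1) cross_nz1 cross_nz2 by blast+
  obtain n where n: "n \<noteq> (0,0,0)" "L = line_of n" using assms(2) unfolding is_line_def by blast
  have "vdot v n = 0" "vdot w n = 0" using assms(3,4) n nz by (auto simp: mem_line_pt)
  then have "vdot n v = 0" "vdot n w = 0" by (simp_all add: vdot_comm[of n])
  then obtain k where k: "n = vsmult k (cross v w)" using orth2 assms(1) by blast
  then have "k \<noteq> 0" using n by auto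
  then show ?thesis using k n by (simp add: line_of_smult)
qed

lemma join_eq:
  assumes "cross v w \<noteq> (0,0,0)"
  shows "join (pt v) (pt w) = line_of (cross v w)"
proof -
  have nz: "v \<noteq> (0,0,0)" "w \<noteq> (0,0,0)" using assms cross_nz1 cross_nz2 by blast+
  show ?thesis unfolding join_def
  proof (rule the_equality)
    show "is_line (line_of (cross v w)) \<and> pt v \<in> line_of (cross v w) \<and> pt w \<in> line_of (cross v w)"
      using assms nz by (simp add: is_line_line_of mem_line_pt vdot_cross1 vdot_cross2)
  next
    fix L assume "is_line L \<and> pt v \<in> L \<and> pt w \<in> L"
    then show "L = line_of (cross v w)" using join_unique assms by blast
  qed
qed

lemma meet_unique:
  assumes "cross u w \<noteq> (0,0,0)" "P \<in> line_of u" "P \<in> line_of w"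
  shows "P = pt (cross u w)"
proof -
  have "vdot (rep P) u = 0" "vdot (rep P) w = 0" using assms by (auto simp: mem_line)
  then obtain k where k: "rep P = vsmult k (cross u w)" using orth2 assms(1) by blast
  then have "k \<noteq> 0" using rep_nz[of P] by auto
  then show ?thesis using k pt_rep[of P] pt_smult by metis
qed

lemma meet_eq:
  assumes "cross u w \<noteq> (0,0,0)"
  shows "meet (line_of u) (line_of w) = pt (cross u w)"
  unfolding meet_def
proof (rule the_equality)
  show "pt (cross u w) \<in> line_of u \<and> pt (cross u w) \<in> line_of w"
    using assms by (simp add: mem_line_pt vdot_comm[of "cross u w"] vdot_cross1 vdot_cross2)
next
  fix P assume "P \<in> line_of u \<and> P \<in> line_of w"
  then show "P = pt (cross u w)" using meet_unique assms by blast
qed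

lemma det_zero_common:
  assumes "n \<noteq> (0,0,0)" "vdot u n = 0" "vdot v n = 0" "vdot w n = 0"
  shows "det3 u v w = 0"
proof -
  have "vsmult (det3 u v w) n = (0,0,0)" using assms(2-4) dual_id[of u v w n] by simp
  then show ?thesis using assms(1) by (simp add: vsmult_zero_iff)
qed

lemma ne_cross: assumes "v \<noteq> (0,0,0)" "w \<noteq> (0,0,0)" "pt v \<noteq> pt w" shows "cross v w \<noteq> (0,0,0)"
proof
  assume "cross v w = (0,0,0)"
  then obtain k where k: "w = vsmult k v" using parallel assms by blast
  then have "k \<noteq> 0" using assms by auto
  then show False using k assms pt_smult by metis
qed

lemma collinear_of_det:
  assumes "det3 u v w = 0" "cross v w \<noteq> (0,0,0)" "u \<noteq> (0,0,0)"
  shows "collinear {pt u, pt v, pt w}"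
proof -
  have nz: "v \<noteq> (0,0,0)" "w \<noteq> (0,0,0)" using assms(2) cross_nz1 cross_nz2 by blast+
  show ?thesis unfolding collinear_def
    apply (rule exI[of _ "line_of (cross v w)"])
    using assms nz by (simp add: is_line_line_of mem_line_pt vdot_cross1 vdot_cross2 det3_def)
qed

lemma det_of_collinear:
  assumes "collinear {pt u, pt v, pt w}" "u \<noteq> (0,0,0)" "v \<noteq> (0,0,0)" "w \<noteq> (0,0,0)"
  shows "det3 u v w = 0"
proof -
  obtain L where "is_line L" "{pt u, pt v, pt w} \<subseteq> L" using assms(1) unfolding collinear_def by blast
  then obtain n where "n \<noteq> (0,0,0)" "pt u \<in> line_of n" "pt v \<in> line_of n" "pt w \<in> line_of n"
    unfolding is_line_def by auto
  then show ?thesis using assms det_zero_common by (simp add: mem_line_pt)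
qed



lemma vsmult_vadd: "vsmult c (vadd x y) = vadd (vsmult c x) (vsmult c y)"
  by (cases x rule: prod_cases3; cases y rule: prod_cases3) (simp add: algebra_simps)

lemma det_comb1: "det3 e (vadd (vsmult x p) (vsmult y q)) q = x * det3 e p q"
  by (cases e rule: prod_cases3; cases p rule: prod_cases3; cases q rule: prod_cases3) (simp add: algebra_simps)
lemma det_comb2: "det3 e p (vadd (vsmult x p) (vsmult y q)) = y * det3 e p q"
  by (cases e rule: prod_cases3; cases p rule: prod_cases3; cases q rule: prod_cases3) (simp add: algebra_simps)

lemma cramer2:
  assumes "det3 e p q \<noteq> 0" "det3 v p q = 0"
  shows "v = vadd (vsmult (det3 e v q / det3 e p q) p) (vsmult (det3 e p v / det3 e p q) q)"
proof -
  let ?D = "det3 e p q"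
  have "vsmult ?D v = vadd (vsmult (det3 e v q) p) (vsmult (det3 e p v) q)"
    using cramer[of e p q v] assms(2) by simp
  then have "vsmult (1/?D) (vsmult ?D v) = vsmult (1/?D) (vadd (vsmult (det3 e v q) p) (vsmult (det3 e p v) q))"
    by simp
  then show ?thesis using assms(1) by (simp add: vsmult_assoc vsmult_1 vsmult_vadd)
qed

lemma coords_eq:
  assumes "det3 e (rep P1) (rep P2) \<noteq> 0" "det3 (rep P3) (rep P1) (rep P2) = 0"
  shows "coords P3 P1 P2 = (det3 e (rep P3) (rep P2) / det3 e (rep P1) (rep P2),
                            det3 e (rep P1) (rep P3) / det3 e (rep P1) (rep P2))"
  unfolding coords_def
proof (rule the_equality)
  show "rep P3 = vadd (vsmult (fst (det3 e (rep P3) (rep P2) / det3 e (rep P1) (rep P2),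
                            det3 e (rep P1) (rep P3) / det3 e (rep P1) (rep P2))) (rep P1))
     (vsmult (snd (det3 e (rep P3) (rep P2) / det3 e (rep P1) (rep P2),
                            det3 e (rep P1) (rep P3) / det3 e (rep P1) (rep P2))) (rep P2))"
    using cramer2[OF assms] by simp
next
  fix p assume h: "rep P3 = vadd (vsmult (fst p) (rep P1)) (vsmult (snd p) (rep P2))"
  have "det3 e (rep P3) (rep P2) = fst p * det3 e (rep P1) (rep P2)"
       "det3 e (rep P1) (rep P3) = snd p * det3 e (rep P1) (rep P2)"
    unfolding h by (simp_all add: det_comb1 det_comb2)
  then show "p = (det3 e (rep P3) (rep P2) / det3 e (rep P1) (rep P2),
                  det3 e (rep P1) (rep P3) / det3 e (rep P1) (rep P2))"
    using assms(1) by (cases p) simp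
qed

lemma scal1: "(D::'a::field) \<noteq> 0 \<Longrightarrow> ((a/D)/(b/D))/((c/D)/(f/D)) = a*(-f)/(c*(-b))"
  by simp

lemma scal2: "(k1::'a::field) \<noteq> 0 \<Longrightarrow> k2 \<noteq> 0 \<Longrightarrow> k3 \<noteq> 0 \<Longrightarrow> k4 \<noteq> 0 \<Longrightarrow>
  (k1*k3*A)*(k2*k4*B)/((k1*k4*C)*(k2*k3*E)) = A*B/(C*E)"
  by simp

lemma cr_rep:
  assumes "det3 e (rep P1) (rep P2) \<noteq> 0" "det3 (rep P3) (rep P1) (rep P2) = 0"
    "det3 (rep P4) (rep P1) (rep P2) = 0"
  shows "cross_ratio P1 P2 P3 P4 = det3 e (rep P1) (rep P3) * det3 e (rep P2) (rep P4) /
      (det3 e (rep P1) (rep P4) * det3 e (rep P2) (rep P3))"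
proof -
  have "cross_ratio P1 P2 P3 P4 =
     ((det3 e (rep P1) (rep P3) / det3 e (rep P1) (rep P2)) / (det3 e (rep P3) (rep P2) / det3 e (rep P1) (rep P2))) /
     ((det3 e (rep P1) (rep P4) / det3 e (rep P1) (rep P2)) / (det3 e (rep P4) (rep P2) / det3 e (rep P1) (rep P2)))"
    unfolding cross_ratio_def using coords_eq[OF assms(1,2)] coords_eq[OF assms(1,3)] by simp
  also have "\<dots> = det3 e (rep P1) (rep P3) * (- det3 e (rep P4) (rep P2)) /
      (det3 e (rep P1) (rep P4) * (- det3 e (rep P3) (rep P2)))"
    using assms(1) by (rule scal1)
  also have "\<dots> = det3 e (rep P1) (rep P3) * det3 e (rep P2) (rep P4) /
      (det3 e (rep P1) (rep P4) * det3 e (rep P2) (rep P3))"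
    using det3_swap[of e "rep P2" "rep P4"] det3_swap[of e "rep P2" "rep P3"] by simp
  finally show ?thesis .
qed

lemma det3_smult3: "det3 (vsmult k u) (vsmult l v) (vsmult m w) = k*l*m * det3 u v w"
  by (rule det3_smult)
lemma det3_smult2: "det3 e (vsmult l v) (vsmult m w) = l*m * det3 e v w"
  using det3_smult[of 1 e l v m w] by (simp add: vsmult_1)

lemma det3_smult1: "det3 (vsmult k u) v w = k * det3 u v w"
  by (cases u rule: prod_cases3; cases v rule: prod_cases3; cases w rule: prod_cases3) (simp add: algebra_simps)

lemma cr_pt:
  assumes "det3 e v1 v2 \<noteq> 0" "det3 v3 v1 v2 = 0" "det3 v4 v1 v2 = 0"
    "v3 \<noteq> (0,0,0)" "v4 \<noteq> (0,0,0)"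
  shows "cross_ratio (pt v1) (pt v2) (pt v3) (pt v4) = det3 e v1 v3 * det3 e v2 v4 /
      (det3 e v1 v4 * det3 e v2 v3)"
proof -
  have nz: "v1 \<noteq> (0,0,0)" "v2 \<noteq> (0,0,0)" using assms(1) det_nz2 det_nz3 by blast+
  obtain k1 where k1: "k1 \<noteq> 0" "rep (pt v1) = vsmult k1 v1" using rep_pt nz by blast
  obtain k2 where k2: "k2 \<noteq> 0" "rep (pt v2) = vsmult k2 v2" using rep_pt nz by blast
  obtain k3 where k3: "k3 \<noteq> 0" "rep (pt v3) = vsmult k3 v3" using rep_pt assms by blast
  obtain k4 where k4: "k4 \<noteq> 0" "rep (pt v4) = vsmult k4 v4" using rep_pt assms by blast
  have "cross_ratio (pt v1) (pt v2) (pt v3) (pt v4) =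
     (k1*k3*det3 e v1 v3) * (k2*k4*det3 e v2 v4) / ((k1*k4*det3 e v1 v4) * (k2*k3*det3 e v2 v3))"
    apply (subst cr_rep[of e])
    using assms k1 k2 k3 k4 by (simp_all add: det3_smult2 det3_smult1)
  also have "\<dots> = det3 e v1 v3 * det3 e v2 v4 / (det3 e v1 v4 * det3 e v2 v3)"
    using k1(1) k2(1) k3(1) k4(1) by (rule scal2)
  finally show ?thesis .
qed

definition pp :: "'a::field vec3 \<Rightarrow> 'a vec3 \<Rightarrow> 'a vec3 \<Rightarrow> 'a vec3" where
  "pp n z x = vadd (vsmult (vdot n x) z) (vsmult (- vdot n z) x)"

lemma cross_pp: "cross z (pp n z x) = vsmult (- vdot n z) (cross z x)"
  unfolding pp_def
  by (cases z rule: prod_cases3; cases n rule: prod_cases3; cases x rule: prod_cases3) (simp add: algebra_simps)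

lemma pp_nz: assumes "vdot n z \<noteq> 0" "cross z x \<noteq> (0,0,0)" shows "pp n z x \<noteq> (0,0,0)"
proof
  assume "pp n z x = (0,0,0)"
  then have "cross z (pp n z x) = (0,0,0)" by (cases z rule: prod_cases3) simp
  then show False using assms by (simp add: cross_pp vsmult_zero_iff)
qed

lemma det_pp: "det3 z (pp n z x) (pp n z y) = (vdot n z)^2 * det3 z x y"
  unfolding pp_def
  by (cases z rule: prod_cases3; cases n rule: prod_cases3; cases x rule: prod_cases3; cases y rule: prod_cases3)
     (simp add: algebra_simps power2_eq_square)

lemma pp_on: "vdot (pp n z x) n = 0"
  unfolding pp_def
  by (cases z rule: prod_cases3; cases n rule: prod_cases3; cases x rule: prod_cases3) (simp add: algebra_simps)

lemma meet_pp:
  assumes "vdot n z \<noteq> 0" "cross z x \<noteq> (0,0,0)"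
  shows "meet (line_of n) (join (pt z) (pt x)) = pt (pp n z x)"
proof -
  have e: "cross n (cross z x) = pp n z x" unfolding pp_def by (simp add: bac_cab)
  show ?thesis using assms pp_nz[OF assms] by (simp add: join_eq meet_eq e)
qed

lemma ex_n: assumes "z \<noteq> (0,0,0)" shows "\<exists>n. n \<noteq> (0,0,0) \<and> vdot n z \<noteq> 0"
proof -
  obtain z1 z2 z3 where z: "z = (z1,z2,z3)" by (cases z rule: prod_cases3)
  show ?thesis
  proof (cases "z1 = 0")
    case False then show ?thesis by (intro exI[of _ "(1,0,0)"]) (simp add: z)
  next
    case T1: True
    show ?thesis
    proof (cases "z2 = 0")
      case False then show ?thesis by (intro exI[of _ "(0,1,0)"]) (simp add: z)
    next
      case True then show ?thesis using T1 assms by (intro exI[of _ "(0,0,1)"]) (simp add: z)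
    qed
  qed
qed

lemma lines_ne:
  assumes "det3 z x y \<noteq> 0"
  shows "line_of (cross z x) \<noteq> line_of (cross z y)"
proof
  assume h: "line_of (cross z x) = line_of (cross z y)"
  have y: "y \<noteq> (0,0,0)" using assms det_nz3 by blast
  have "pt y \<in> line_of (cross z y)" using y by (simp add: mem_line_pt vdot_cross2)
  then have "pt y \<in> line_of (cross z x)" using h by simp
  then have "vdot y (cross z x) = 0" using y by (simp add: mem_line_pt)
  then have "det3 y z x = 0" by (simp add: det3_def)
  then show False using assms by (simp add: det3_cyc[of y])
qed

lemma cross_of_det: "det3 z x y \<noteq> 0 \<Longrightarrow> cross z x \<noteq> (0,0,0) \<and> cross z y \<noteq> (0,0,0)"
proof -
  assume h: "det3 z x y \<noteq> 0"
  have "det3 y z x \<noteq> 0" using h by (simp add: det3_cyc[of y])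
  moreover have h1: "det3 x y z \<noteq> 0" using h by (simp add: det3_cyc[of z])
  moreover have "det3 x z y \<noteq> 0" using h1 det3_swap[of x z y] by simp
  ultimately show ?thesis using det_nz_cross by blast
qed

lemma pencil_bwd:
  assumes d12: "det3 z x1 x2 \<noteq> 0" and d13: "det3 z x1 x3 \<noteq> 0" and d14: "det3 z x1 x4 \<noteq> 0"
    and d23: "det3 z x2 x3 \<noteq> 0" and d24: "det3 z x2 x4 \<noteq> 0" and d34: "det3 z x3 x4 \<noteq> 0"
    and F: "det3 z x1 x3 * det3 z x2 x4 + det3 z x1 x4 * det3 z x2 x3 = 0"
  shows "harmonic_pencil (join (pt z) (pt x1)) (join (pt z) (pt x2)) (join (pt z) (pt x3)) (join (pt z) (pt x4))"
proof -
  have c: "cross z x1 \<noteq> (0,0,0)" "cross z x2 \<noteq> (0,0,0)" "cross z x3 \<noteq> (0,0,0)" "cross z x4 \<noteq> (0,0,0)"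
    using cross_of_det[OF d12] cross_of_det[OF d34] by auto
  have z: "z \<noteq> (0,0,0)" using d12 det_nz1 by blast
  obtain n where n: "n \<noteq> (0,0,0)" "vdot n z \<noteq> 0" using ex_n z by blast
  have J: "join (pt z) (pt x1) = line_of (cross z x1)" "join (pt z) (pt x2) = line_of (cross z x2)"
    "join (pt z) (pt x3) = line_of (cross z x3)" "join (pt z) (pt x4) = line_of (cross z x4)"
    using join_eq[OF c(1)] join_eq[OF c(2)] join_eq[OF c(3)] join_eq[OF c(4)] by simp_all
  have M: "meet (line_of n) (line_of (cross z x1)) = pt (pp n z x1)"
    "meet (line_of n) (line_of (cross z x2)) = pt (pp n z x2)"
    "meet (line_of n) (line_of (cross z x3)) = pt (pp n z x3)"
    "meet (line_of n) (line_of (cross z x4)) = pt (pp n z x4)"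
    using meet_pp[OF n(2)] c J by metis+
  have pnz: "pp n z x1 \<noteq> (0,0,0)" "pp n z x2 \<noteq> (0,0,0)" "pp n z x3 \<noteq> (0,0,0)" "pp n z x4 \<noteq> (0,0,0)"
    using pp_nz[OF n(2)] c by auto
  let ?k = "(vdot n z)^2"
  have k: "?k \<noteq> 0" using n by simp
  have dp: "\<And>x y. det3 z (pp n z x) (pp n z y) = ?k * det3 z x y" by (rule det_pp)
  have hs: "harmonic_set (pt (pp n z x1)) (pt (pp n z x2)) (pt (pp n z x3)) (pt (pp n z x4))"
    unfolding harmonic_set_def
  proof (intro conjI)
    show "distinct [pt (pp n z x1), pt (pp n z x2), pt (pp n z x3), pt (pp n z x4)]"
      using d12 d13 d14 d23 d24 d34 k det_ne_pt[of z] by (simp add: dp)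
    show "collinear {pt (pp n z x1), pt (pp n z x2), pt (pp n z x3), pt (pp n z x4)}"
      unfolding collinear_def
      apply (rule exI[of _ "line_of n"])
      using n pnz by (simp add: is_line_line_of mem_line_pt pp_on)
    have "det3 (pp n z x3) (pp n z x1) (pp n z x2) = 0" "det3 (pp n z x4) (pp n z x1) (pp n z x2) = 0"
      using det_zero_common[OF n(1)] pp_on by blast+
    then have "cross_ratio (pt (pp n z x1)) (pt (pp n z x2)) (pt (pp n z x3)) (pt (pp n z x4)) =
       (?k * det3 z x1 x3) * (?k * det3 z x2 x4) / ((?k * det3 z x1 x4) * (?k * det3 z x2 x3))"
      using cr_pt[of z] d12 k pnz by (simp add: dp)
    also have "\<dots> = det3 z x1 x3 * det3 z x2 x4 / (det3 z x1 x4 * det3 z x2 x3)"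
      using k by simp
    also have "\<dots> = -1"
    proof -
      have "det3 z x1 x3 * det3 z x2 x4 = - (det3 z x1 x4 * det3 z x2 x3)" using F by (simp add: eq_neg_iff_add_eq_0)
      then show ?thesis using d14 d23 by simp
    qed
    finally show "cross_ratio (pt (pp n z x1)) (pt (pp n z x2)) (pt (pp n z x3)) (pt (pp n z x4)) = -1" .
  qed
  show ?thesis unfolding harmonic_pencil_def J
  proof (intro conjI)
    show "is_line (line_of (cross z x1))" "is_line (line_of (cross z x2))"
      "is_line (line_of (cross z x3))" "is_line (line_of (cross z x4))"
      using c by (simp_all add: is_line_line_of)
    show "distinct [line_of (cross z x1), line_of (cross z x2), line_of (cross z x3), line_of (cross z x4)]"
      using lines_ne[OF d12] lines_ne[OF d13] lines_ne[OF d14] lines_ne[OF d23] lines_ne[OF d24] lines_ne[OF d34]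
      by simp
    show "\<exists>P0. P0 \<in> line_of (cross z x1) \<and> P0 \<in> line_of (cross z x2) \<and> P0 \<in> line_of (cross z x3) \<and>
        P0 \<in> line_of (cross z x4) \<and> (\<exists>m. is_line m \<and> P0 \<notin> m \<and>
           harmonic_set (meet m (line_of (cross z x1))) (meet m (line_of (cross z x2)))
             (meet m (line_of (cross z x3))) (meet m (line_of (cross z x4))))"
      apply (rule exI[of _ "pt z"])
      using z n hs M by (auto simp: mem_line_pt vdot_cross1 is_line_line_of vdot_comm[of z] intro!: exI[of _ "line_of n"])
  qed
qed

lemma pencil_fwd:
  assumes c: "cross z x1 \<noteq> (0,0,0)" "cross z x2 \<noteq> (0,0,0)" "cross z x3 \<noteq> (0,0,0)" "cross z x4 \<noteq> (0,0,0)"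
    and H: "harmonic_pencil (join (pt z) (pt x1)) (join (pt z) (pt x2)) (join (pt z) (pt x3)) (join (pt z) (pt x4))"
  shows "det3 z x1 x2 \<noteq> 0 \<and> det3 z x1 x3 \<noteq> 0 \<and> det3 z x1 x4 \<noteq> 0 \<and>
    det3 z x2 x3 \<noteq> 0 \<and> det3 z x2 x4 \<noteq> 0 \<and> det3 z x3 x4 \<noteq> 0 \<and>
    det3 z x1 x3 * det3 z x2 x4 + det3 z x1 x4 * det3 z x2 x3 = 0"
proof -
  have z: "z \<noteq> (0,0,0)" using c(1) cross_nz1 by blast
  have J: "join (pt z) (pt x1) = line_of (cross z x1)" "join (pt z) (pt x2) = line_of (cross z x2)"
    "join (pt z) (pt x3) = line_of (cross z x3)" "join (pt z) (pt x4) = line_of (cross z x4)"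
    using join_eq[OF c(1)] join_eq[OF c(2)] join_eq[OF c(3)] join_eq[OF c(4)] by simp_all
  have DL: "det3 z x y \<noteq> 0" if "cross z x \<noteq> (0,0,0)" "cross z y \<noteq> (0,0,0)"
     "line_of (cross z x) \<noteq> line_of (cross z y)" for x y
  proof
    assume d: "det3 z x y = 0"
    have y: "y \<noteq> (0,0,0)" using that(2) cross_nz2 by blast
    have "vdot y (cross z x) = 0" using d det3_cyc[of y z x] by (simp add: det3_def)
    then have "pt y \<in> line_of (cross z x)" using y by (simp add: mem_line_pt)
    moreover have "pt z \<in> line_of (cross z x)" using z by (simp add: mem_line_pt vdot_cross1)
    ultimately have "line_of (cross z x) = line_of (cross z y)"
      using join_unique[OF that(2)] that(1) is_line_line_of by blast
    then show False using that(3) by simp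
  qed
  have dist: "distinct [line_of (cross z x1), line_of (cross z x2), line_of (cross z x3), line_of (cross z x4)]"
    using H unfolding harmonic_pencil_def J by blast
  have d: "det3 z x1 x2 \<noteq> 0" "det3 z x1 x3 \<noteq> 0" "det3 z x1 x4 \<noteq> 0"
    "det3 z x2 x3 \<noteq> 0" "det3 z x2 x4 \<noteq> 0" "det3 z x3 x4 \<noteq> 0"
    using DL[OF c(1) c(2)] DL[OF c(1) c(3)] DL[OF c(1) c(4)] DL[OF c(2) c(3)] DL[OF c(2) c(4)] DL[OF c(3) c(4)] dist
    by simp_all
  obtain P0 m where P0: "P0 \<in> line_of (cross z x1)" "P0 \<in> line_of (cross z x2)"
    and m: "is_line m" "P0 \<notin> m" and
    hs: "harmonic_set (meet m (line_of (cross z x1))) (meet m (line_of (cross z x2)))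
             (meet m (line_of (cross z x3))) (meet m (line_of (cross z x4)))"
    using H unfolding harmonic_pencil_def J by blast
  have cc: "cross (cross z x1) (cross z x2) = vsmult (det3 z x1 x2) z"
    by (simp add: cross4 det3_cyc[of z x1 z] det3_vv)
  have "cross (cross z x1) (cross z x2) \<noteq> (0,0,0)" using cc d z by (simp add: vsmult_zero_iff)
  then have "P0 = pt (cross (cross z x1) (cross z x2))" using meet_unique P0 by blast
  then have P0z: "P0 = pt z" using cc d pt_smult by metis
  obtain n where n: "n \<noteq> (0,0,0)" "m = line_of n" using m(1) unfolding is_line_def by blast
  have nz: "vdot n z \<noteq> 0" using m(2) n P0z z by (simp add: mem_line_pt vdot_comm[of z])
  have M: "meet (line_of n) (line_of (cross z x1)) = pt (pp n z x1)"
    "meet (line_of n) (line_of (cross z x2)) = pt (pp n z x2)"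
    "meet (line_of n) (line_of (cross z x3)) = pt (pp n z x3)"
    "meet (line_of n) (line_of (cross z x4)) = pt (pp n z x4)"
    using meet_pp[OF nz] c J by metis+
  have pnz: "pp n z x1 \<noteq> (0,0,0)" "pp n z x2 \<noteq> (0,0,0)" "pp n z x3 \<noteq> (0,0,0)" "pp n z x4 \<noteq> (0,0,0)"
    using pp_nz[OF nz] c by auto
  let ?k = "(vdot n z)^2"
  have k: "?k \<noteq> 0" using nz by simp
  have dp: "\<And>x y. det3 z (pp n z x) (pp n z y) = ?k * det3 z x y" by (rule det_pp)
  have "det3 (pp n z x3) (pp n z x1) (pp n z x2) = 0" "det3 (pp n z x4) (pp n z x1) (pp n z x2) = 0"
    using det_zero_common[OF n(1)] pp_on by blast+
  then have "cross_ratio (pt (pp n z x1)) (pt (pp n z x2)) (pt (pp n z x3)) (pt (pp n z x4)) =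
       (?k * det3 z x1 x3) * (?k * det3 z x2 x4) / ((?k * det3 z x1 x4) * (?k * det3 z x2 x3))"
    using cr_pt[of z] d k pnz by (simp add: dp)
  also have "\<dots> = det3 z x1 x3 * det3 z x2 x4 / (det3 z x1 x4 * det3 z x2 x3)"
    using k by simp
  finally have "det3 z x1 x3 * det3 z x2 x4 / (det3 z x1 x4 * det3 z x2 x3) = -1"
    using hs unfolding n(2) M harmonic_set_def by simp
  then have "det3 z x1 x3 * det3 z x2 x4 = - (det3 z x1 x4 * det3 z x2 x3)"
    using d by (simp add: divide_eq_eq)
  then show ?thesis using d by (simp add: eq_neg_iff_add_eq_0)
qed



definition lin :: "'a::field vec3 \<Rightarrow> 'a vec3 \<Rightarrow> 'a vec3 \<Rightarrow> 'a vec3 \<Rightarrow> 'a vec3" where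
  "lin a b c q = (case q of (q1,q2,q3) \<Rightarrow> vadd (vadd (vsmult q1 a) (vsmult q2 b)) (vsmult q3 c))"

lemma lin_simp: "lin a b c (q1,q2,q3) = vadd (vadd (vsmult q1 a) (vsmult q2 b)) (vsmult q3 c)"
  by (simp add: lin_def)

lemma det_lin: "det3 (lin a b c p) (lin a b c q) (lin a b c r) = det3 p q r * det3 a b c"
  by (cases a rule: prod_cases3; cases b rule: prod_cases3; cases c rule: prod_cases3;
      cases p rule: prod_cases3; cases q rule: prod_cases3; cases r rule: prod_cases3)
     (simp add: lin_simp algebra_simps)

lemma lin_smult: "lin a b c (vsmult k p) = vsmult k (lin a b c p)"
  by (cases a rule: prod_cases3; cases b rule: prod_cases3; cases c rule: prod_cases3;
      cases p rule: prod_cases3) (simp add: lin_simp algebra_simps)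

lemma lin_comb: "lin a b c (vadd (vsmult x p) (vsmult y q)) = vadd (vsmult x (lin a b c p)) (vsmult y (lin a b c q))"
  by (cases a rule: prod_cases3; cases b rule: prod_cases3; cases c rule: prod_cases3;
      cases p rule: prod_cases3; cases q rule: prod_cases3) (simp add: lin_simp algebra_simps)

lemma lin_e1: "lin a b c (1,0,0) = a" and lin_e2: "lin a b c (0,1,0) = b" and lin_e3: "lin a b c (0,0,1) = c"
  and lin_0: "lin a b c (0,0,0) = (0,0,0)"
  by (simp_all add: lin_simp vsmult_1)

locale frame =
  fixes a b c :: "'a::field vec3"
  assumes K: "det3 a b c \<noteq> 0"
begin

abbreviation L where "L q \<equiv> lin a b c q"
abbreviation Pt where "Pt q \<equiv> pt (lin a b c q)"

lemma lin_inj: assumes "L p = L q" shows "p = q"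
proof -
  obtain p1 p2 p3 where p: "p = (p1,p2,p3)" by (cases p rule: prod_cases3)
  obtain q1 q2 q3 where q: "q = (q1,q2,q3)" by (cases q rule: prod_cases3)
  have "det3 (L p) (L (0,1,0)) (L (0,0,1)) = det3 (L q) (L (0,1,0)) (L (0,0,1))"
       "det3 (L (1,0,0)) (L p) (L (0,0,1)) = det3 (L (1,0,0)) (L q) (L (0,0,1))"
       "det3 (L (1,0,0)) (L (0,1,0)) (L p) = det3 (L (1,0,0)) (L (0,1,0)) (L q)"
    using assms by simp_all
  then show ?thesis unfolding det_lin using K by (simp add: p q)
qed

lemma lin_nz: "p \<noteq> (0,0,0) \<Longrightarrow> L p \<noteq> (0,0,0)"
  using lin_inj lin_0 by metis

lemma lin_onto: "\<exists>q. L q = v"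
proof -
  let ?K = "det3 a b c"
  have "vsmult ?K v = vadd (vadd (vsmult (det3 v b c) a) (vsmult (det3 a v c) b)) (vsmult (det3 a b v) c)"
    by (rule cramer)
  then have "vsmult (1/?K) (vsmult ?K v) = vsmult (1/?K) (vadd (vadd (vsmult (det3 v b c) a) (vsmult (det3 a v c) b)) (vsmult (det3 a b v) c))"
    by simp
  then have "v = L (det3 v b c / ?K, det3 a v c / ?K, det3 a b v / ?K)"
    using K by (simp add: vsmult_assoc vsmult_1 vsmult_vadd lin_simp)
  then show ?thesis by metis
qed

lemma Pt_smult: "k \<noteq> 0 \<Longrightarrow> Pt (vsmult k p) = Pt p"
  by (simp add: lin_smult pt_smult)

lemma Pt_eq: assumes "p \<noteq> (0,0,0)" "q \<noteq> (0,0,0)" "Pt p = Pt q"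
  shows "\<exists>k. k \<noteq> 0 \<and> q = vsmult k p"
proof -
  obtain k where "k \<noteq> 0" "L q = vsmult k (L p)" using pt_eq assms lin_nz by blast
  then have "L q = L (vsmult k p)" "k \<noteq> 0" by (simp_all add: lin_smult)
  then show ?thesis using lin_inj by blast
qed

lemma Pt_ne: "det3 e p q \<noteq> 0 \<Longrightarrow> Pt p \<noteq> Pt q"
  using det_ne_pt[of "L e" "L p" "L q"] K by (simp add: det_lin)

lemma Pt_surj: "\<exists>q. q \<noteq> (0,0,0) \<and> X = Pt q"
proof -
  obtain q where q: "L q = rep X" using lin_onto by blast
  then have "q \<noteq> (0,0,0)" using rep_nz[of X] lin_0 by metis
  then show ?thesis using q pt_rep[of X] by metis
qed

lemma cross_lin: assumes "cross p q \<noteq> (0,0,0)" shows "cross (L p) (L q) \<noteq> (0,0,0)"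
proof -
  obtain n where "vdot n (cross p q) \<noteq> 0" using ex_n assms by blast
  then have "det3 n p q \<noteq> 0" by (simp add: det3_def)
  then have "det3 (L n) (L p) (L q) \<noteq> 0" using K by (simp add: det_lin)
  then show ?thesis using det_nz_cross by blast
qed

lemma join_Pt: "cross p q \<noteq> (0,0,0) \<Longrightarrow> join (Pt p) (Pt q) = line_of (cross (L p) (L q))"
  using join_eq cross_lin by blast

lemma mem_Pt_line: "r \<noteq> (0,0,0) \<Longrightarrow> Pt r \<in> line_of (cross (L p) (L q)) \<longleftrightarrow> det3 r p q = 0"
  using K lin_nz[of r] by (simp add: mem_line_pt det3_def[symmetric] det_lin)

lemma meet_join_Pt:
  assumes "cross p q \<noteq> (0,0,0)" "cross r s \<noteq> (0,0,0)"
    "vadd (vsmult (det3 p q s) r) (vsmult (- det3 p q r) s) \<noteq> (0,0,0)"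
  shows "meet (join (Pt p) (Pt q)) (join (Pt r) (Pt s)) = Pt (vadd (vsmult (det3 p q s) r) (vsmult (- det3 p q r) s))"
proof -
  let ?v = "vadd (vsmult (det3 p q s) r) (vsmult (- det3 p q r) s)"
  have e: "cross (cross (L p) (L q)) (cross (L r) (L s)) = vsmult (det3 a b c) (L ?v)"
    by (simp add: cross4 det_lin lin_comb vsmult_vadd vsmult_assoc algebra_simps)
  have "L ?v \<noteq> (0,0,0)" using lin_nz assms(3) by blast
  then have nz: "cross (cross (L p) (L q)) (cross (L r) (L s)) \<noteq> (0,0,0)"
    using e K by (simp add: vsmult_zero_iff)
  show ?thesis using assms join_Pt meet_eq[OF nz] e K pt_smult by metis
qed

lemma det_of_collinear_Pt:
  assumes "collinear {Pt p, Pt q, Pt r}" "p \<noteq> (0,0,0)" "q \<noteq> (0,0,0)" "r \<noteq> (0,0,0)"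
  shows "det3 p q r = 0"
  using det_of_collinear[OF assms(1)] lin_nz assms K by (simp add: det_lin)

lemma pencil_bwd_Pt:
  assumes d: "det3 z x1 x2 \<noteq> 0" "det3 z x1 x3 \<noteq> 0" "det3 z x1 x4 \<noteq> 0"
    "det3 z x2 x3 \<noteq> 0" "det3 z x2 x4 \<noteq> 0" "det3 z x3 x4 \<noteq> 0"
    and F: "det3 z x1 x3 * det3 z x2 x4 + det3 z x1 x4 * det3 z x2 x3 = 0"
  shows "harmonic_pencil (join (Pt z) (Pt x1)) (join (Pt z) (Pt x2)) (join (Pt z) (Pt x3)) (join (Pt z) (Pt x4))"
proof (rule pencil_bwd)
  show "det3 (L z) (L x1) (L x2) \<noteq> 0" "det3 (L z) (L x1) (L x3) \<noteq> 0" "det3 (L z) (L x1) (L x4) \<noteq> 0"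
    "det3 (L z) (L x2) (L x3) \<noteq> 0" "det3 (L z) (L x2) (L x4) \<noteq> 0" "det3 (L z) (L x3) (L x4) \<noteq> 0"
    using d K by (simp_all add: det_lin)
  have "det3 (L z) (L x1) (L x3) * det3 (L z) (L x2) (L x4) + det3 (L z) (L x1) (L x4) * det3 (L z) (L x2) (L x3)
     = (det3 a b c)^2 * (det3 z x1 x3 * det3 z x2 x4 + det3 z x1 x4 * det3 z x2 x3)"
    by (simp add: det_lin algebra_simps power2_eq_square)
  then show "det3 (L z) (L x1) (L x3) * det3 (L z) (L x2) (L x4) + det3 (L z) (L x1) (L x4) * det3 (L z) (L x2) (L x3) = 0"
    using F by simp
qed

lemma pencil_fwd_Pt:
  assumes nz: "z \<noteq> (0,0,0)" "x1 \<noteq> (0,0,0)" "x2 \<noteq> (0,0,0)" "x3 \<noteq> (0,0,0)" "x4 \<noteq> (0,0,0)"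
    and ne: "Pt z \<noteq> Pt x1" "Pt z \<noteq> Pt x2" "Pt z \<noteq> Pt x3" "Pt z \<noteq> Pt x4"
    and H: "harmonic_pencil (join (Pt z) (Pt x1)) (join (Pt z) (Pt x2)) (join (Pt z) (Pt x3)) (join (Pt z) (Pt x4))"
  shows "det3 z x1 x2 \<noteq> 0 \<and> det3 z x1 x3 \<noteq> 0 \<and> det3 z x1 x4 \<noteq> 0 \<and>
    det3 z x2 x3 \<noteq> 0 \<and> det3 z x2 x4 \<noteq> 0 \<and> det3 z x3 x4 \<noteq> 0 \<and>
    det3 z x1 x3 * det3 z x2 x4 + det3 z x1 x4 * det3 z x2 x3 = 0"
proof -
  have c: "cross (L z) (L x1) \<noteq> (0,0,0)" "cross (L z) (L x2) \<noteq> (0,0,0)"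
    "cross (L z) (L x3) \<noteq> (0,0,0)" "cross (L z) (L x4) \<noteq> (0,0,0)"
    using ne_cross lin_nz nz ne by blast+
  have R: "det3 (L z) (L x1) (L x2) \<noteq> 0 \<and> det3 (L z) (L x1) (L x3) \<noteq> 0 \<and> det3 (L z) (L x1) (L x4) \<noteq> 0 \<and>
    det3 (L z) (L x2) (L x3) \<noteq> 0 \<and> det3 (L z) (L x2) (L x4) \<noteq> 0 \<and> det3 (L z) (L x3) (L x4) \<noteq> 0 \<and>
    det3 (L z) (L x1) (L x3) * det3 (L z) (L x2) (L x4) + det3 (L z) (L x1) (L x4) * det3 (L z) (L x2) (L x3) = 0"
    by (rule pencil_fwd[OF c H])
  have "det3 (L z) (L x1) (L x3) * det3 (L z) (L x2) (L x4) + det3 (L z) (L x1) (L x4) * det3 (L z) (L x2) (L x3)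
     = (det3 a b c)^2 * (det3 z x1 x3 * det3 z x2 x4 + det3 z x1 x4 * det3 z x2 x3)"
    by (simp add: det_lin algebra_simps power2_eq_square)
  then show ?thesis using R K by (simp add: det_lin)
qed

end



lemma (in frame) cr_Pt:
  assumes "det3 e p1 p2 \<noteq> 0" "det3 p3 p1 p2 = 0" "det3 p4 p1 p2 = 0"
    "p3 \<noteq> (0,0,0)" "p4 \<noteq> (0,0,0)"
  shows "cross_ratio (Pt p1) (Pt p2) (Pt p3) (Pt p4) = det3 e p1 p3 * det3 e p2 p4 /
      (det3 e p1 p4 * det3 e p2 p3)"
proof -
  have "cross_ratio (Pt p1) (Pt p2) (Pt p3) (Pt p4) = (det3 e p1 p3 * det3 a b c) * (det3 e p2 p4 * det3 a b c) /
      ((det3 e p1 p4 * det3 a b c) * (det3 e p2 p3 * det3 a b c))"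
    using cr_pt[of "L e" "L p1" "L p2" "L p3" "L p4"] assms K lin_nz by (simp add: det_lin)
  also have "\<dots> = det3 e p1 p3 * det3 e p2 p4 / (det3 e p1 p4 * det3 e p2 p3)"
    using K by simp
  finally show ?thesis .
qed

lemma (in frame) Pt_prop: "q = vsmult k p \<Longrightarrow> q \<noteq> (0,0,0) \<Longrightarrow> Pt q = Pt p"
  using Pt_smult by (cases "k = 0") auto

definition gg :: "'a::field \<Rightarrow> 'a \<Rightarrow> 'a \<Rightarrow> 'a \<Rightarrow> 'a \<Rightarrow> 'a vec3" where
  "gg al be ga s t = (s * (t*al + s*be), t * (t*al + s*be), 2*s*t*ga)"

definition fpoly :: "'a::field \<Rightarrow> 'a \<Rightarrow> 'a \<Rightarrow> 'a vec3 \<Rightarrow> 'a" where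
  "fpoly al be ga q = (case q of (u,v,w) \<Rightarrow> -2*u*v*ga + v*w*al + u*w*be)"

lemma gg_nz:
  fixes al be ga s t :: "'a::field"
  assumes "al \<noteq> 0" "be \<noteq> 0" "ga \<noteq> 0" "2 \<noteq> (0::'a)" "s \<noteq> 0 \<or> t \<noteq> 0"
  shows "gg al be ga s t \<noteq> (0,0,0)"
proof (cases "t*al + s*be = 0")
  case True
  have "s \<noteq> 0" using True assms by auto
  moreover have "t \<noteq> 0" using True assms calculation by auto
  ultimately show ?thesis using assms by (simp add: gg_def)
next
  case False
  then show ?thesis using assms by (auto simp: gg_def)
qed

lemma fpoly_gg: "fpoly al be ga (gg al be ga s t) = 0"
  by (simp add: fpoly_def gg_def algebra_simps)

lemma inj_scal:
  fixes al be ga s t s' t' k :: "'a::field"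
  assumes "al \<noteq> 0" "be \<noteq> 0" "ga \<noteq> 0" "2 \<noteq> (0::'a)" "s \<noteq> 0 \<or> t \<noteq> 0" "s' \<noteq> 0 \<or> t' \<noteq> 0"
    "gg al be ga s' t' = vsmult k (gg al be ga s t)" "k \<noteq> 0"
  shows "\<exists>e. (s',t',0) = vsmult e (s,t,0)"
proof -
  define l where "l = t*al + s*be"
  define l' where "l' = t'*al + s'*be"
  have E: "s'*l' = k*(s*l)" "t'*l' = k*(t*l)" using assms(7) by (simp_all add: gg_def l_def l'_def)
  show ?thesis
  proof (cases "l = 0")
    case True
    have "s'*l' = 0" "t'*l' = 0" using E True by simp_all
    then have l'0: "l' = 0" using assms(6) by auto
    have "t*al*s' = t'*al*s"
    proof -
      have "t*al = -(s*be)" "t'*al = -(s'*be)" using True l'0 unfolding l_def l'_def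
        by (simp_all add: eq_neg_iff_add_eq_0)
      then show ?thesis by (simp add: algebra_simps)
    qed
    then have ts: "t*s' = t'*s" using assms(1) by (simp add: algebra_simps)
    have "s \<noteq> 0" using True assms(1,5) unfolding l_def by auto
    then show ?thesis using ts by (intro exI[of _ "s'/s"]) (simp add: field_simps)
  next
    case False
    have "l' \<noteq> 0" using E False assms(5,8) by auto
    then show ?thesis using E False by (intro exI[of _ "k*l/l'"]) (simp add: field_simps)
  qed
qed

lemma surj_scal:
  fixes al be ga u v w :: "'a::field"
  assumes "al \<noteq> 0" "be \<noteq> 0" "ga \<noteq> 0" "2 \<noteq> (0::'a)" "fpoly al be ga (u,v,w) = 0" "(u,v,w) \<noteq> (0,0,0)"
  shows "\<exists>s t k. (s \<noteq> 0 \<or> t \<noteq> 0) \<and> gg al be ga s t = vsmult k (u,v,w)"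
proof (cases "u = 0 \<and> v = 0")
  case True
  then have "w \<noteq> 0" using assms by auto
  then show ?thesis using True assms
    by (intro exI[of _ al] exI[of _ "-be"] exI[of _ "-2*al*be*ga/w"]) (simp add: gg_def algebra_simps)
next
  case False
  define l where "l = v*al + u*be"
  have f: "2*u*v*ga = w*l" using assms(5) unfolding fpoly_def l_def by (simp add: algebra_simps)
  have "l \<noteq> 0"
  proof
    assume l0: "l = 0"
    then have "u*v = 0" using f assms(3,4) by simp
    then show False using l0 False assms(1,2) unfolding l_def by auto
  qed
  show ?thesis using False f
    by (intro exI[of _ u] exI[of _ v] exI[of _ l]) (simp add: gg_def l_def algebra_simps)
qed



lemma vert_cases:
  fixes al be ga u v w :: "'a::field"
  assumes al: "al \<noteq> 0" and be: "be \<noteq> 0" and ga: "ga \<noteq> 0" and two: "2 \<noteq> (0::'a)"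
    and f: "fpoly al be ga (u,v,w) = 0"
    and d: "det3 (u,v,w) (1,0,0) (0,1,0) = 0 \<or> det3 (u,v,w) (1,0,0) (0,0,1) = 0 \<or>
       det3 (u,v,w) (1,0,0) (al,be,ga) = 0 \<or> det3 (u,v,w) (0,1,0) (0,0,1) = 0 \<or>
       det3 (u,v,w) (0,1,0) (al,be,ga) = 0 \<or> det3 (u,v,w) (0,0,1) (al,be,ga) = 0"
  shows "(\<exists>k. (u,v,w) = vsmult k (1,0,0)) \<or> (\<exists>k. (u,v,w) = vsmult k (0,1,0)) \<or>
         (\<exists>k. (u,v,w) = vsmult k (0,0,1)) \<or> (\<exists>k. (u,v,w) = vsmult k (al,be,ga))"
proof -
  have f': "-2*u*v*ga + v*w*al + u*w*be = 0" using f by (simp add: fpoly_def)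
  have d': "w = 0 \<or> v = 0 \<or> w*be = v*ga \<or> u = 0 \<or> u*ga = w*al \<or> v*al = u*be"
    using d by (simp add: algebra_simps)
  have E1: "\<exists>k. (u,v,w) = vsmult k (1,0,0)" if "v = 0" "w = 0" using that by auto
  have E2: "\<exists>k. (u,v,w) = vsmult k (0,1,0)" if "u = 0" "w = 0" using that by auto
  have E3: "\<exists>k. (u,v,w) = vsmult k (0,0,1)" if "u = 0" "v = 0" using that by auto
  show ?thesis
  proof (cases "w = 0")
    case w0: True
    then have "u*v = 0" using f' ga two by simp
    then show ?thesis using w0 E1 E2 by auto
  next
    case wnz: False
    show ?thesis
    proof (cases "v = 0")
      case v0: True
      then have "u*w*be = 0" using f' by simp
      then show ?thesis using v0 wnz be E3 by auto
    next
      case vnz: False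
      show ?thesis
      proof (cases "u = 0")
        case u0: True
        then have "v*w*al = 0" using f' by simp
        then show ?thesis using u0 vnz wnz al by auto
      next
        case unz: False
        have c: "w*be = v*ga \<or> u*ga = w*al \<or> v*al = u*be" using d' unz vnz wnz by auto
        have "(u,v,w) = vsmult (w/ga) (al,be,ga)" if "w*be = v*ga" "u*ga = w*al"
          using that ga by (simp add: field_simps)
        moreover have "u*ga = w*al" if h: "w*be = v*ga"
        proof -
          have "0 = ga * (-2*u*v*ga + v*w*al + u*w*be)" using f' by simp
          also have "\<dots> = w*be*(w*al - u*ga)" using h by (simp add: algebra_simps)
          finally show ?thesis using wnz be by simp
        qed
        moreover have "w*be = v*ga" if h: "u*ga = w*al"
        proof -
          have "0 = ga * (-2*u*v*ga + v*w*al + u*w*be)" using f' by simp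
          also have "\<dots> = -2*v*ga*(u*ga) + v*w*al*ga + (u*ga)*w*be" by (simp add: algebra_simps)
          also have "\<dots> = w*al*(w*be - v*ga)" unfolding h by (simp add: algebra_simps)
          finally show ?thesis using wnz al by simp
        qed
        moreover have "w*be = v*ga" if h: "v*al = u*be"
        proof -
          have "0 = be * (-2*u*v*ga + v*w*al + u*w*be)" using f' by simp
          also have "\<dots> = -2*v*ga*(u*be) + v*w*al*be + (u*be)*w*be" by (simp add: algebra_simps)
          also have "\<dots> = 2*v*al*(w*be - v*ga)" unfolding h[symmetric] by (simp add: algebra_simps)
          finally show ?thesis using vnz al two by simp
        qed
        ultimately show ?thesis using c by blast
      qed
    qed
  qed
qed

locale quadr = frame +
  fixes al be ga :: 'a
  assumes al: "al \<noteq> 0" and be: "be \<noteq> 0" and ga: "ga \<noteq> 0" and two: "(2::'a) \<noteq> 0"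
begin

abbreviation "PA \<equiv> Pt (1,0,0)"
abbreviation "PB \<equiv> Pt (0,1,0)"
abbreviation "PC \<equiv> Pt (0,0,1)"
abbreviation "PD \<equiv> Pt (al,be,ga)"

lemma joinAB_eq: "join PA PB = line_of (cross (L (1,0,0)) (L (0,1,0)))"
  by (rule join_Pt) simp

lemma joinAB: "X \<in> join PA PB \<longleftrightarrow> (\<exists>s t. (s \<noteq> 0 \<or> t \<noteq> 0) \<and> X = Pt (s,t,0))"
proof
  assume "X \<in> join PA PB"
  moreover obtain q where q: "q \<noteq> (0,0,0)" "X = Pt q" using Pt_surj by blast
  ultimately have "det3 q (1,0,0) (0,1,0) = 0" using joinAB_eq mem_Pt_line by simp
  moreover obtain q1 q2 q3 where "q = (q1,q2,q3)" by (cases q rule: prod_cases3)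
  ultimately show "\<exists>s t. (s \<noteq> 0 \<or> t \<noteq> 0) \<and> X = Pt (s,t,0)" using q by auto
next
  assume "\<exists>s t. (s \<noteq> 0 \<or> t \<noteq> 0) \<and> X = Pt (s,t,0)"
  then obtain s t where "s \<noteq> 0 \<or> t \<noteq> 0" "X = Pt (s,t,0)" by blast
  then show "X \<in> join PA PB" using joinAB_eq mem_Pt_line[of "(s,t,0)"] by auto
qed

lemma hreflX:
  assumes st: "s \<noteq> 0 \<or> t \<noteq> 0"
  shows "hrefl PA PB (Pt (s,t,0)) = Pt (s,-t,0)"
proof (cases "s = 0")
  case True
  then have t: "t \<noteq> 0" using st by simp
  have "Pt (0,t,0) = PB" by (rule Pt_prop[of _ t]) (simp_all add: t)
  moreover have "Pt (0,-t,0) = PB" by (rule Pt_prop[of _ "-t"]) (simp_all add: t)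
  ultimately show ?thesis using True by (simp add: hrefl_def)
next
  case snz: False
  show ?thesis
  proof (cases "t = 0")
    case True
    have "Pt (s,0,0) = PA" using snz by (auto intro!: Pt_prop[of _ s])
    then show ?thesis using True by (simp add: hrefl_def)
  next
    case tnz: False
    have nA: "Pt (s,t,0) \<noteq> PA" by (rule Pt_ne[of "(0,0,1)"]) (simp add: tnz)
    have nB: "Pt (s,t,0) \<noteq> PB" by (rule Pt_ne[of "(0,0,1)"]) (simp add: snz)
    have HS: "harmonic_set PA PB (Pt (s,t,0)) (Pt (s,-t,0))"
      unfolding harmonic_set_def
    proof (intro conjI)
      have "PA \<noteq> PB" by (rule Pt_ne[of "(0,0,1)"]) simp
      moreover have "PA \<noteq> Pt (s,-t,0)" by (rule Pt_ne[of "(0,0,1)"]) (simp add: tnz)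
      moreover have "PB \<noteq> Pt (s,-t,0)" by (rule Pt_ne[of "(0,0,1)"]) (simp add: snz)
      moreover have "Pt (s,t,0) \<noteq> Pt (s,-t,0)"
      proof (rule Pt_ne[of "(0,0,1)"])
        have "det3 (0,0,1) (s,t,0) (s,-t,0) = -(2*(s*t))" by (simp add: algebra_simps)
        then show "det3 (0,0,1) (s,t,0) (s,-t,0) \<noteq> 0" using snz tnz two by simp
      qed
      ultimately show "distinct [PA, PB, Pt (s,t,0), Pt (s,-t,0)]" using nA nB by auto
      show "collinear {PA, PB, Pt (s,t,0), Pt (s,-t,0)}" unfolding collinear_def
        apply (rule exI[of _ "line_of (cross (L (1,0,0)) (L (0,1,0)))"])
        using snz cross_lin[of "(1,0,0)" "(0,1,0)"] by (simp add: is_line_line_of mem_Pt_line)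
      show "cross_ratio PA PB (Pt (s,t,0)) (Pt (s,-t,0)) = -1"
        using cr_Pt[of "(0,0,1)" "(1,0,0)" "(0,1,0)" "(s,t,0)" "(s,-t,0)"] snz tnz by simp
    qed
    have "hrefl PA PB (Pt (s,t,0)) = (THE Y. harmonic_set PA PB (Pt (s,t,0)) Y)"
      using nA nB by (simp add: hrefl_def)
    also have "\<dots> = Pt (s,-t,0)"
    proof (rule the_equality)
      show "harmonic_set PA PB (Pt (s,t,0)) (Pt (s,-t,0))" by (rule HS)
    next
      fix Y assume h: "harmonic_set PA PB (Pt (s,t,0)) Y"
      obtain q where q: "q \<noteq> (0,0,0)" "Y = Pt q" using Pt_surj by blast
      obtain q1 q2 q3 where q123: "q = (q1,q2,q3)" by (cases q rule: prod_cases3)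
      have "collinear {PA, PB, Pt q}" using h q unfolding harmonic_set_def collinear_def by blast
      then have "det3 (1,0,0) (0,1,0) q = 0" using det_of_collinear_Pt q by simp
      then have q3: "q3 = 0" by (simp add: q123)
      have "cross_ratio PA PB (Pt (s,t,0)) (Pt q) = -1" using h q unfolding harmonic_set_def by simp
      then have cr: "t * (- q1) / (q2 * (- s)) = -1"
        using cr_Pt[of "(0,0,1)" "(1,0,0)" "(0,1,0)" "(s,t,0)" q] snz tnz q q123 q3 by simp
      then have q2: "q2 \<noteq> 0" by auto
      then have "t * (- q1) = - (q2 * (- s))" using cr snz by (simp add: divide_eq_eq)
      then have q1t: "q1*t = -(q2*s)" by algebra
      have "q1 = q1*t/t" using tnz by simp
      also have "\<dots> = (-q2/t)*s" unfolding q1t by simp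
      finally have "q1 = (-q2/t)*s" .
      then have "q = vsmult (-q2/t) (s,-t,0)" using q123 q3 tnz by simp
      then show "Y = Pt (s,-t,0)" using q Pt_prop by blast
    qed
    finally show ?thesis .
  qed
qed

lemma lines_neq:
  assumes st: "s \<noteq> 0 \<or> t \<noteq> 0"
  shows "join PC (Pt (s,t,0)) \<noteq> join PD (Pt (s,-t,0))"
proof
  have c1: "cross (0,0,1) (s,t,0) \<noteq> (0,0,(0::'a))" using st by auto
  have "ga * t \<noteq> 0 \<or> ga * s \<noteq> 0" using st ga by auto
  then have c2: "cross (al,be,ga) (s,-t,0) \<noteq> (0,0,0)" by auto
  assume "join PC (Pt (s,t,0)) = join PD (Pt (s,-t,0))"
  then have E: "line_of (cross (L (0,0,1)) (L (s,t,0))) = line_of (cross (L (al,be,ga)) (L (s,-t,0)))"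
    using join_Pt[OF c1] join_Pt[OF c2] by simp
  have "PC \<in> line_of (cross (L (0,0,1)) (L (s,t,0)))" by (simp add: mem_Pt_line)
  then have "det3 (0,0,1) (al,be,ga) (s,-t,0) = 0" using E mem_Pt_line[of "(0,0,1)"] by simp
  moreover have "det3 (0,0,1) (al,be,ga) (s,-t,0) = -(al*t + be*s)" by (simp add: algebra_simps)
  ultimately have "-(al*t + be*s) = 0" by metis
  then have h1: "al*t + be*s = 0" by algebra
  have "Pt (s,t,0) \<in> line_of (cross (L (0,0,1)) (L (s,t,0)))" using st by (simp add: mem_Pt_line)
  then have "det3 (s,t,0) (al,be,ga) (s,-t,0) = 0" using E mem_Pt_line[of "(s,t,0)"] st by simp
  then have "2*s*t*ga = 0" by (simp add: algebra_simps)
  then have "s = 0 \<or> t = 0" using ga two by simp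
  then show False using h1 st al be by auto
qed

lemma Zform:
  assumes st: "s \<noteq> 0 \<or> t \<noteq> 0"
  shows "meet (join PC (Pt (s,t,0))) (join PD (Pt (s,-t,0))) = Pt (gg al be ga s t)"
proof -
  have c1: "cross (0,0,1) (s,t,0) \<noteq> (0,0,(0::'a))" using st by auto
  have "ga * t \<noteq> 0 \<or> ga * s \<noteq> 0" using st ga by auto
  then have c2: "cross (al,be,ga) (s,-t,0) \<noteq> (0,0,0)" by auto
  have v: "vadd (vsmult (det3 (0,0,1) (s,t,0) (s,-t,0)) (al,be,ga)) (vsmult (- det3 (0,0,1) (s,t,0) (al,be,ga)) (s,-t,0))
     = vsmult (-1) (gg al be ga s t)"
    by (simp add: gg_def algebra_simps)
  have g: "gg al be ga s t \<noteq> (0,0,0)" using gg_nz al be ga two st by blast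
  then have vnz: "vsmult (-1) (gg al be ga s t) \<noteq> (0,0,0)" by (simp add: vsmult_zero_iff)
  have "meet (join PC (Pt (s,t,0))) (join PD (Pt (s,-t,0))) =
    Pt (vadd (vsmult (det3 (0,0,1) (s,t,0) (s,-t,0)) (al,be,ga)) (vsmult (- det3 (0,0,1) (s,t,0) (al,be,ga)) (s,-t,0)))"
    by (rule meet_join_Pt[OF c1 c2]) (unfold v, rule vnz)
  also have "\<dots> = Pt (gg al be ga s t)" unfolding v by (rule Pt_smult) simp
  finally show ?thesis .
qed

lemma Fdet: "det3 q (1,0,0) (0,0,1) * det3 q (0,1,0) (al,be,ga) + det3 q (1,0,0) (al,be,ga) * det3 q (0,1,0) (0,0,1)
   = fpoly al be ga q"
  by (cases q rule: prod_cases3) (simp add: fpoly_def algebra_simps)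

lemma curve_iff:
  assumes q: "q \<noteq> (0,0,0)"
  shows "Pt q \<in> harmonic_curve PA PC PB PD \<longleftrightarrow> fpoly al be ga q = 0"
proof
  assume h: "Pt q \<in> harmonic_curve PA PC PB PD"
  show "fpoly al be ga q = 0"
  proof (cases "Pt q \<in> {PA, PB, PC, PD}")
    case True
    then have "(\<exists>k. q = vsmult k (1,0,0)) \<or> (\<exists>k. q = vsmult k (0,1,0)) \<or> (\<exists>k. q = vsmult k (0,0,1)) \<or>
      (\<exists>k. q = vsmult k (al,be,ga))"
    proof -
      have nz: "((1,0,0)::'a vec3) \<noteq> (0,0,0)" "((0,1,0)::'a vec3) \<noteq> (0,0,0)" "((0,0,1)::'a vec3) \<noteq> (0,0,0)" "(al,be,ga) \<noteq> (0,0,0)"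
        using al by auto
      show ?thesis using True Pt_eq[OF nz(1) q] Pt_eq[OF nz(2) q] Pt_eq[OF nz(3) q] Pt_eq[OF nz(4) q] by auto
    qed
    then show ?thesis by (auto simp: fpoly_def algebra_simps)
  next
    case False
    then have H: "harmonic_pencil (join (Pt q) PA) (join (Pt q) PB) (join (Pt q) PC) (join (Pt q) PD)"
      using h unfolding harmonic_curve_def by auto
    have "det3 q (1,0,0) (0,0,1) * det3 q (0,1,0) (al,be,ga) + det3 q (1,0,0) (al,be,ga) * det3 q (0,1,0) (0,0,1) = 0"
      using pencil_fwd_Pt[OF q _ _ _ _ _ _ _ _ H] False al by auto
    then show ?thesis by (simp add: Fdet)
  qed
next
  assume f: "fpoly al be ga q = 0"
  show "Pt q \<in> harmonic_curve PA PC PB PD"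
  proof (cases "Pt q \<in> {PA, PB, PC, PD}")
    case True
    then show ?thesis unfolding harmonic_curve_def by auto
  next
    case False
    obtain u v w where quvw: "q = (u,v,w)" by (cases q rule: prod_cases3)
    have D: "det3 q (1,0,0) (0,1,0) \<noteq> 0 \<and> det3 q (1,0,0) (0,0,1) \<noteq> 0 \<and>
       det3 q (1,0,0) (al,be,ga) \<noteq> 0 \<and> det3 q (0,1,0) (0,0,1) \<noteq> 0 \<and>
       det3 q (0,1,0) (al,be,ga) \<noteq> 0 \<and> det3 q (0,0,1) (al,be,ga) \<noteq> 0"
    proof (rule ccontr)
      assume "\<not> ?thesis"
      then have "(\<exists>k. q = vsmult k (1,0,0)) \<or> (\<exists>k. q = vsmult k (0,1,0)) \<or>
         (\<exists>k. q = vsmult k (0,0,1)) \<or> (\<exists>k. q = vsmult k (al,be,ga))"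
        using vert_cases[OF al be ga two, of u v w] f quvw by blast
      then have "Pt q \<in> {PA, PB, PC, PD}" using q Pt_prop by blast
      then show False using False by blast
    qed
    have "harmonic_pencil (join (Pt q) PA) (join (Pt q) PB) (join (Pt q) PC) (join (Pt q) PD)"
      using pencil_bwd_Pt D f by (simp add: Fdet)
    then show ?thesis using False unfolding harmonic_curve_def by auto
  qed
qed

theorem quadr_main:
  "(\<forall>X \<in> join PA PB. join PC X \<noteq> join PD (hrefl PA PB X)) \<and>
   bij_betw (\<lambda>X. meet (join PC X) (join PD (hrefl PA PB X))) (join PA PB) (harmonic_curve PA PC PB PD)"
proof -
  let ?f = "\<lambda>X. meet (join PC X) (join PD (hrefl PA PB X))"
  have fX: "?f (Pt (s,t,0)) = Pt (gg al be ga s t)" if "s \<noteq> 0 \<or> t \<noteq> 0" for s t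
    using that by (simp add: hreflX Zform)
  have g: "gg al be ga s t \<noteq> (0,0,0)" if "s \<noteq> 0 \<or> t \<noteq> 0" for s t
    using gg_nz al be ga two that by blast
  have P1: "\<forall>X \<in> join PA PB. join PC X \<noteq> join PD (hrefl PA PB X)"
    using joinAB hreflX lines_neq by auto
  have inj: "inj_on ?f (join PA PB)"
  proof (rule inj_onI)
    fix X Y assume X: "X \<in> join PA PB" and Y: "Y \<in> join PA PB" and e: "?f X = ?f Y"
    obtain s t where st: "s \<noteq> 0 \<or> t \<noteq> 0" "X = Pt (s,t,0)" using X joinAB by blast
    obtain s' t' where st': "s' \<noteq> 0 \<or> t' \<noteq> 0" "Y = Pt (s',t',0)" using Y joinAB by blast
    have "Pt (gg al be ga s t) = Pt (gg al be ga s' t')" using e st st' fX by simp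
    then obtain k where k: "k \<noteq> 0" "gg al be ga s' t' = vsmult k (gg al be ga s t)"
      using Pt_eq g st st' by blast
    then obtain e where "(s',t',0) = vsmult e (s,t,0)" using inj_scal[OF al be ga two st(1) st'(1)] by blast
    moreover have "(s',t',0) \<noteq> (0,0,0)" using st'(1) by simp
    ultimately have "Pt (s',t',0) = Pt (s,t,0)" using Pt_prop by blast
    then show "X = Y" using st st' by simp
  qed
  have img: "?f ` join PA PB = harmonic_curve PA PC PB PD"
  proof (intro set_eqI iffI)
    fix Z assume "Z \<in> ?f ` join PA PB"
    then obtain X where X: "X \<in> join PA PB" "Z = ?f X" by blast
    obtain s t where st: "s \<noteq> 0 \<or> t \<noteq> 0" "X = Pt (s,t,0)" using X joinAB by blast
    then show "Z \<in> harmonic_curve PA PC PB PD" using X fX g curve_iff fpoly_gg by simp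
  next
    fix Z assume Z: "Z \<in> harmonic_curve PA PC PB PD"
    obtain q where q: "q \<noteq> (0,0,0)" "Z = Pt q" using Pt_surj by blast
    obtain u v w where quvw: "q = (u,v,w)" by (cases q rule: prod_cases3)
    have "fpoly al be ga q = 0" using curve_iff q Z by blast
    then obtain s t k where stk: "s \<noteq> 0 \<or> t \<noteq> 0" "gg al be ga s t = vsmult k q"
      using surj_scal[OF al be ga two, of u v w] q quvw by blast
    then have "Pt (gg al be ga s t) = Pt q" using Pt_prop g by blast
    then have "Z = ?f (Pt (s,t,0))" using fX stk q by simp
    moreover have "Pt (s,t,0) \<in> join PA PB" using joinAB stk by blast
    ultimately show "Z \<in> ?f ` join PA PB" by blast
  qed
  show ?thesis using P1 inj img unfolding bij_betw_def by blast
qed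

end



lemma noncol_det:
  assumes "\<not> collinear {pt u, pt v, pt w}" "u \<noteq> (0,0,0)" "v \<noteq> (0,0,0)" "w \<noteq> (0,0,0)" "pt v \<noteq> pt w"
  shows "det3 u v w \<noteq> 0"
  using collinear_of_det[OF _ ne_cross[OF assms(3,4,5)] assms(2)] assms(1) by blast

theorem mainTheorem2:
  fixes A C B D :: "'a::field point"
  assumes char: "(2::'a) \<noteq> 0"
    and Q: "quadrangle A C B D"
  shows "(\<forall>X \<in> join A B. join C X \<noteq> join D (hrefl A B X)) \<and>
         bij_betw (\<lambda>X. meet (join C X) (join D (hrefl A B X))) (join A B)
           (harmonic_curve A C B D)"
proof -
  define a where "a = rep A"
  define b where "b = rep B"
  define c where "c = rep C"
  define d where "d = rep D"
  have nz: "a \<noteq> (0,0,0)" "b \<noteq> (0,0,0)" "c \<noteq> (0,0,0)" "d \<noteq> (0,0,0)"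
    unfolding a_def b_def c_def d_def by (simp_all add: rep_nz)
  have P: "pt a = A" "pt b = B" "pt c = C" "pt d = D"
    unfolding a_def b_def c_def d_def by (simp_all add: pt_rep)
  have QQ: "distinct [A, C, B, D]" "\<not> collinear {A, C, B}" "\<not> collinear {A, C, D}"
     "\<not> collinear {A, B, D}" "\<not> collinear {C, B, D}"
    using Q unfolding quadrangle_def by auto
  have acb: "det3 a c b \<noteq> 0" using noncol_det[of a c b] QQ nz P by auto
  have acd: "det3 a c d \<noteq> 0" using noncol_det[of a c d] QQ nz P by auto
  have abd: "det3 a b d \<noteq> 0" using noncol_det[of a b d] QQ nz P by auto
  have cbd: "det3 c b d \<noteq> 0" using noncol_det[of c b d] QQ nz P by auto
  have K: "det3 a b c \<noteq> 0" using acb det3_swap[of a c b] by simp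
  interpret frame a b c by unfold_locales (rule K)
  obtain q where q: "lin a b c q = d" using lin_onto by blast
  obtain al be ga where qq: "q = (al,be,ga)" by (cases q rule: prod_cases3)
  have "det3 c b d = det3 (0,0,1) (0,1,0) q * det3 a b c"
    using det_lin[of a b c "(0,0,1)" "(0,1,0)" q] q by (simp add: lin_e2 lin_e3)
  then have al: "al \<noteq> 0" using cbd qq by simp
  have "det3 a c d = det3 (1,0,0) (0,0,1) q * det3 a b c"
    using det_lin[of a b c "(1,0,0)" "(0,0,1)" q] q by (simp add: lin_e1 lin_e3)
  then have be: "be \<noteq> 0" using acd qq by simp
  have "det3 a b d = det3 (1,0,0) (0,1,0) q * det3 a b c"
    using det_lin[of a b c "(1,0,0)" "(0,1,0)" q] q by (simp add: lin_e1 lin_e2)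
  then have ga: "ga \<noteq> 0" using abd qq by simp
  interpret quadr a b c al be ga by unfold_locales (simp_all add: al be ga char)
  have E: "PA = A" "PB = B" "PC = C" "PD = D"
    using P q qq by (simp_all add: lin_e1 lin_e2 lin_e3)
  show ?thesis using quadr_main unfolding E .
qed

end
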